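(* For every formula $\varphi$ of Hennessy–Milner logic, the sets $[\![\varphi]\!]^a$ and $[\![\varphi]\!]^c$ are clopen in the Lawson topology of $\mathbb{D}$. In particular, $C_\Phi$ is Lawson-closed.
   Context: Fix a finite set $\mathrm{Act}$ of events. For a dcpo $D$, $K(D)$ denotes its compact elements; a bifinite (SFP) domain is an algebraic dcpo in which for each finite $F\subseteq K(D)$ iterated minimal-upper-bound sets are finite and in $K(D)$ and every upper bound of $F$ is above a minimal upper bound. Scott topology: sets $U={\uparrow}(U\cap K(D))$; Lawson topology generated by ${\uparrow}k\setminus{\uparrow}l$, $k,l\in K(D)$. Mixed powerdomain $\mathcal{M}(D)$: pairs $(L,U)$, $L$ Scott-closed, $U$ Lawson-closed upper, $L={\downarrow}(L\cap U)$, ordered by $L\subseteq L'$ and $U'\subseteq U$. $\mathbb{D}$ is the initial solution over bifinite domains of $\mathbb{D}\cong\prod_{\alpha\in\mathrm{Act}}\mathcal{M}(\mathbb{D})$, $d=((L^d_\alpha,U^d_\alpha))_\alpha$, viewed as a mixed transition system $(\mathbb{D},\mathbb{R}^a,\mathbb{R}^c)$ with $(d,\alpha,d')\in\mathbb{R}^a$ iff $d'\in L^d_\alpha$ and $(d,\alpha,d')\in\mathbb{R}^c$ iff $d'\in U^d_\alpha$. Hennessy–Milner logic: $\varphi::=tt\mid\neg\varphi\mid\langle\alpha\rangle\varphi\mid\varphi\wedge\varphi$; $[\alpha]\varphi:=\neg\langle\alpha\rangle\neg\varphi$, $\varphi\vee\psi:=\neg(\neg\varphi\wedge\neg\psi)$;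 empty conjunction $tt$, empty disjunction $\neg tt$. For $m\in\{a,c\}$ ($\neg a=c$, $\neg c=a$): $(\mathbb{D},d)\models^m tt$; $\models^m\neg\varphi$ iff not $\models^{\neg m}\varphi$; $(\mathbb{D},d)\models^m\langle\alpha\rangle\varphi$ iff $(\mathbb{D},d')\models^m\varphi$ for some $(d,\alpha,d')\in\mathbb{R}^m$; $\wedge$ componentwise. $[\![\varphi]\!]^m=\{d\in\mathbb{D} : (\mathbb{D},d)\models^m\varphi\}$. Process terms $p::=\mathbf{0}\mid\bot\mid\alpha_{tt}.p\mid\alpha_\bot.p\mid p+p$ (no summand of $+$ equal to $\mathbf{0}$ or $\bot$). Transitions: $\bot\xrightarrow{\gamma}_\bot\bot$ for all $\gamma$; $\alpha_{tt}.p\xrightarrow{\alpha}_{tt}p$; $\alpha_\bot.p\xrightarrow{\alpha}_\bot p$; if $p\xrightarrow{\alpha}_v p'$ then $p+q\xrightarrow{\alpha}_v p'$ and $q+p\xrightarrow{\alpha}_v p'$. Formulas: $\varphi_{\mathbf{0}}=\bigwedge_\alpha\neg\langle\alpha\rangle tt$; $\varphi_\bot=tt$; $\varphi_{\alpha_{tt}.p}=\langle\alpha\rangle\varphi_p\wedge[\alpha]\varphi_p\wedge\bigwedge_{\beta\ne\alpha}\neg\langle\beta\rangle tt$; $\varphi_{\alpha_\bot.p}=[\alpha]\varphi_p\wedge\bigwedge_{\beta\ne\alpha}\neg\langle\beta\rangle tt$; $\varphi_{p+q}=\bigwedge\{\langle\alpha\rangle\varphi_{r'} : p+q\xrightarrow{\alpha}_{tt}r'\}\wedge\bigwedge_\alpha[\alpha]\bigvee\{\varphi_{r'}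 : p+q\xrightarrow{\alpha}_v r',\ v\in\{\bot,tt\}\}$. For $w=\delta_1\cdots\delta_n\in\mathrm{Act}^*$, $\alpha\in\mathrm{Act}$, term $p$: $\psi_{w,\alpha,p}=[\delta_1]\cdots[\delta_n](\langle\alpha\rangle\varphi_p\vee\neg\langle\alpha\rangle\varphi_p)$; $\Phi$ is the set of all such formulas; $C_\Phi=\bigcap_{\psi\in\Phi}[\![\psi]\!]^a$. *)

theory Defs
  imports "HOL-Analysis.Analysis"
begin

section \<open>Basic domain theory on a partially ordered type (carrier = UNIV)\<close>

definition upset :: "'a::order set \<Rightarrow> 'a set" where
  "upset S = {y. \<exists>x\<in>S. x \<le> y}"

definition downset :: "'a::order set \<Rightarrow> 'a set" where
  "downset S = {y. \<exists>x\<in>S. y \<le> x}"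

definition directed :: "'a::order set \<Rightarrow> bool" where
  "directed S \<longleftrightarrow> S \<noteq> {} \<and> (\<forall>x\<in>S. \<forall>y\<in>S. \<exists>z\<in>S. x \<le> z \<and> y \<le> z)"

definition is_ub :: "'a::order set \<Rightarrow> 'a \<Rightarrow> bool" where
  "is_ub S u \<longleftrightarrow> (\<forall>x\<in>S. x \<le> u)"

definition is_lub :: "'a::order set \<Rightarrow> 'a \<Rightarrow> bool" where
  "is_lub S u \<longleftrightarrow> is_ub S u \<and> (\<forall>v. is_ub S v \<longrightarrow> u \<le> v)"

definition dcpo :: "'a::order itself \<Rightarrow> bool" where
  "dcpo _ \<longleftrightarrow> (\<forall>S::'a set. directed S \<longrightarrow> (\<exists>u. is_lub S u))"

definition compact_el :: "'a::order \<Rightarrow> bool" where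
  "compact_el k \<longleftrightarrow> (\<forall>S s. directed S \<and> is_lub S s \<and> k \<le> s \<longrightarrow> (\<exists>x\<in>S. k \<le> x))"

definition KD :: "'a::order set" where
  "KD = {k. compact_el k}"

definition algebraic :: "'a::order itself \<Rightarrow> bool" where
  "algebraic T \<longleftrightarrow> dcpo T \<and>
     (\<forall>x::'a. directed {k\<in>KD. k \<le> x} \<and> is_lub {k\<in>KD. k \<le> x} x)"

definition mub :: "'a::order set \<Rightarrow> 'a set" where
  "mub F = {u. is_ub F u \<and> (\<forall>v. is_ub F v \<and> v \<le> u \<longrightarrow> v = u)}"

definition mub_step :: "'a::order set \<Rightarrow> 'a set" where
  "mub_step X = \<Union>{mub Y | Y. Y \<subseteq> X \<and> finite Y}"

definition mub_closure :: "'a::order set \<Rightarrow> 'a set" where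
  "mub_closure F = (\<Union>n. (mub_step ^^ n) F)"

definition bifinite :: "'a::order itself \<Rightarrow> bool" where
  "bifinite T \<longleftrightarrow> algebraic T \<and>
     (\<forall>F::'a set. finite F \<and> F \<subseteq> KD \<longrightarrow>
        finite (mub_closure F) \<and> mub_closure F \<subseteq> KD \<and>
        (\<forall>u. is_ub F u \<longrightarrow> (\<exists>m\<in>mub F. m \<le> u)))"

definition scott_open :: "'a::order set \<Rightarrow> bool" where
  "scott_open U \<longleftrightarrow> U = upset (U \<inter> KD)"

definition scott_closed :: "'a::order set \<Rightarrow> bool" where
  "scott_closed C \<longleftrightarrow> scott_open (- C)"

definition scott_closure :: "'a::order set \<Rightarrow> 'a set" where
  "scott_closure S = \<Inter>{C. scott_closed C \<and> S \<subseteq> C}"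

definition lawson :: "'a::order topology" where
  "lawson = topology_generated_by
     ({upset {k} | k. k \<in> KD} \<union> {- upset {l} | l. l \<in> KD})"

definition lawson_clopen :: "'a::order set \<Rightarrow> bool" where
  "lawson_clopen S \<longleftrightarrow> openin lawson S \<and> closedin lawson S"

definition mixed_pd :: "('a::order set \<times> 'a set) set" where
  "mixed_pd = {(L, U). scott_closed L \<and> closedin lawson U \<and> upset U = U
                      \<and> L = downset (L \<inter> U)}"

definition mixed_le :: "('a::order set \<times> 'a set) \<Rightarrow> ('a set \<times> 'a set) \<Rightarrow> bool" where
  "mixed_le x y \<longleftrightarrow> fst x \<subseteq> fst y \<and> snd y \<subseteq> snd x"

definition mixed_map :: "('a::order \<Rightarrow> 'a) \<Rightarrow> ('a set \<times> 'a set) \<Rightarrow> ('a set \<times> 'a set)" where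
  "mixed_map f x = (scott_closure (f ` fst x), upset (f ` snd x))"

text \<open>isom : D \<rightarrow> \<Prod>_{\<alpha>\<in>Act} M(D) is an order isomorphism; initiality (canonicity)
  is expressed by Pitts' minimal invariance: the identity is the least upper
  bound of the iterates delta_n of the functional f \<mapsto> isom^{-1} o \<Prod>M(f) o isom
  starting from the constant bottom map.\<close>

definition is_solution :: "('d::order \<Rightarrow> ('act \<Rightarrow> 'd set \<times> 'd set)) \<Rightarrow> bool" where
  "is_solution isom \<longleftrightarrow>
     bij_betw isom UNIV {g. \<forall>\<alpha>. g \<alpha> \<in> mixed_pd} \<and>
     (\<forall>d d'. d \<le> d' \<longleftrightarrow> (\<forall>\<alpha>. mixed_le (isom d \<alpha>) (isom d' \<alpha>)))"

definition approx_step :: "('d::order \<Rightarrow> ('act \<Rightarrow> 'd set \<times> 'd set)) \<Rightarrow> ('d \<Rightarrow> 'd) \<Rightarrow> ('d \<Rightarrow> 'd)" where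
  "approx_step isom f = (\<lambda>d. inv isom (\<lambda>\<alpha>. mixed_map f (isom d \<alpha>)))"

primrec approx :: "('d::order \<Rightarrow> ('act \<Rightarrow> 'd set \<times> 'd set)) \<Rightarrow> nat \<Rightarrow> 'd \<Rightarrow> 'd" where
  "approx isom 0 = (\<lambda>d. inv isom (\<lambda>\<alpha>. ({}, UNIV)))"
| "approx isom (Suc n) = approx_step isom (approx isom n)"

definition minimal_invariant :: "('d::order \<Rightarrow> ('act \<Rightarrow> 'd set \<times> 'd set)) \<Rightarrow> bool" where
  "minimal_invariant isom \<longleftrightarrow> (\<forall>d. is_lub (range (\<lambda>n. approx isom n d)) d)"

definition initial_solution :: "('d::order \<Rightarrow> ('act::finite \<Rightarrow> 'd set \<times> 'd set)) \<Rightarrow> bool" where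
  "initial_solution isom \<longleftrightarrow> bifinite TYPE('d) \<and> is_solution isom \<and> minimal_invariant isom"

datatype 'act hml = TT | Neg "'act hml" | Dia 'act "'act hml" | Conj "'act hml" "'act hml"

definition Box :: "'act \<Rightarrow> 'act hml \<Rightarrow> 'act hml" where
  "Box \<alpha> \<phi> = Neg (Dia \<alpha> (Neg \<phi>))"

definition Disj :: "'act hml \<Rightarrow> 'act hml \<Rightarrow> 'act hml" where
  "Disj \<phi> \<psi> = Neg (Conj (Neg \<phi>) (Neg \<psi>))"

datatype mode = ModeA | ModeC

fun neg_mode :: "mode \<Rightarrow> mode" where
  "neg_mode ModeA = ModeC" | "neg_mode ModeC = ModeA"

fun trans_rel :: "('d \<Rightarrow> ('act \<Rightarrow> 'd set \<times> 'd set)) \<Rightarrow> mode \<Rightarrow> 'd \<Rightarrow> 'act \<Rightarrow> 'd \<Rightarrow> bool" where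
  "trans_rel isom ModeA d \<alpha> d' \<longleftrightarrow> d' \<in> fst (isom d \<alpha>)"
| "trans_rel isom ModeC d \<alpha> d' \<longleftrightarrow> d' \<in> snd (isom d \<alpha>)"

primrec sat :: "('d \<Rightarrow> ('act \<Rightarrow> 'd set \<times> 'd set)) \<Rightarrow> mode \<Rightarrow> 'd \<Rightarrow> 'act hml \<Rightarrow> bool" where
  "sat isom m d TT \<longleftrightarrow> True"
| "sat isom m d (Neg \<phi>) \<longleftrightarrow> \<not> sat isom (neg_mode m) d \<phi>"
| "sat isom m d (Dia \<alpha> \<phi>) \<longleftrightarrow> (\<exists>d'. trans_rel isom m d \<alpha> d' \<and> sat isom m d' \<phi>)"
| "sat isom m d (Conj \<phi> \<psi>) \<longleftrightarrow> sat isom m d \<phi> \<and> sat isom m d \<psi>"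

definition sem :: "('d \<Rightarrow> ('act \<Rightarrow> 'd set \<times> 'd set)) \<Rightarrow> mode \<Rightarrow> 'act hml \<Rightarrow> 'd set" where
  "sem isom m \<phi> = {d. sat isom m d \<phi>}"

fun conj_list :: "'act hml list \<Rightarrow> 'act hml" where
  "conj_list [] = TT"
| "conj_list [\<phi>] = \<phi>"
| "conj_list (\<phi> # \<psi>s) = Conj \<phi> (conj_list \<psi>s)"

fun disj_list :: "'act hml list \<Rightarrow> 'act hml" where
  "disj_list [] = Neg TT"
| "disj_list [\<phi>] = \<phi>"
| "disj_list (\<phi> # \<psi>s) = Disj \<phi> (disj_list \<psi>s)"

definition BigConj :: "'act hml set \<Rightarrow> 'act hml" where
  "BigConj S = conj_list (SOME xs. set xs = S \<and> distinct xs)"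

definition BigDisj :: "'act hml set \<Rightarrow> 'act hml" where
  "BigDisj S = disj_list (SOME xs. set xs = S \<and> distinct xs)"

datatype 'act proc = Nil0 | Bot | PreTT 'act "'act proc" | PreBot 'act "'act proc"
  | Sum "'act proc" "'act proc"

fun wf_proc :: "'act proc \<Rightarrow> bool" where
  "wf_proc Nil0 = True"
| "wf_proc Bot = True"
| "wf_proc (PreTT \<alpha> p) = wf_proc p"
| "wf_proc (PreBot \<alpha> p) = wf_proc p"
| "wf_proc (Sum p q) \<longleftrightarrow> wf_proc p \<and> wf_proc q \<and> p \<notin> {Nil0, Bot} \<and> q \<notin> {Nil0, Bot}"

text \<open>Transitions p --\<alpha>-->_v p', with v = True for tt and v = False for \<bottom>.\<close>
inductive step :: "'act proc \<Rightarrow> 'act \<Rightarrow> bool \<Rightarrow> 'act proc \<Rightarrow> bool" where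
  bot: "step Bot \<gamma> False Bot"
| pre_tt: "step (PreTT \<alpha> p) \<alpha> True p"
| pre_bot: "step (PreBot \<alpha> p) \<alpha> False p"
| sum_l: "step p \<alpha> v p' \<Longrightarrow> step (Sum p q) \<alpha> v p'"
| sum_r: "step p \<alpha> v p' \<Longrightarrow> step (Sum q p) \<alpha> v p'"

lemma step_size: "step p \<alpha> v p' \<Longrightarrow> size p' \<le> size p"
  by (induction rule: step.induct) auto

lemma step_Sum_size: "step (Sum p q) \<alpha> v r \<Longrightarrow> size r < size (Sum p q)"
proof -
  assume "step (Sum p q) \<alpha> v r"
  then have "step p \<alpha> v r \<or> step q \<alpha> v r"
    by (cases rule: step.cases) auto
  then show ?thesis by (auto dest!: step_size)
qed

function char_formula :: "'act proc \<Rightarrow> 'act hml" where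
  "char_formula Nil0 = BigConj {Neg (Dia \<alpha> TT) | \<alpha>. True}"
| "char_formula Bot = TT"
| "char_formula (PreTT \<alpha> p) =
     Conj (Dia \<alpha> (char_formula p))
       (Conj (Box \<alpha> (char_formula p)) (BigConj {Neg (Dia \<beta> TT) | \<beta>. \<beta> \<noteq> \<alpha>}))"
| "char_formula (PreBot \<alpha> p) =
     Conj (Box \<alpha> (char_formula p)) (BigConj {Neg (Dia \<beta> TT) | \<beta>. \<beta> \<noteq> \<alpha>})"
| "char_formula (Sum p q) =
     Conj (BigConj ((\<lambda>(\<alpha>, r). Dia \<alpha> (char_formula r)) ` {(\<alpha>, r). step (Sum p q) \<alpha> True r}))
          (BigConj ((\<lambda>\<alpha>. Box \<alpha> (BigDisj (char_formula ` {r. \<exists>v. step (Sum p q) \<alpha> v r}))) ` UNIV))"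
  by pat_completeness auto
termination
  by (relation "Wellfounded.measure size") (auto dest: step_Sum_size)

definition boxes :: "'act list \<Rightarrow> 'act hml \<Rightarrow> 'act hml" where
  "boxes w \<phi> = foldr Box w \<phi>"

definition psi :: "'act list \<Rightarrow> 'act \<Rightarrow> 'act proc \<Rightarrow> 'act hml" where
  "psi w \<alpha> p = boxes w (Disj (Dia \<alpha> (char_formula p)) (Neg (Dia \<alpha> (char_formula p))))"

definition PhiSet :: "'act hml set" where
  "PhiSet = {psi w \<alpha> p | w \<alpha> p. wf_proc p}"

definition C_Phi :: "('d \<Rightarrow> ('act \<Rightarrow> 'd set \<times> 'd set)) \<Rightarrow> 'd set" where
  "C_Phi isom = (\<Inter>\<psi>\<in>PhiSet. sem isom ModeA \<psi>)"

end

theory Submission imports Defs begin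

locale dom =
  fixes isom :: "'d::order \<Rightarrow> ('act::finite \<Rightarrow> 'd set \<times> 'd set)"
  assumes init: "initial_solution isom"
begin

abbreviation Lf where "Lf d \<alpha> \<equiv> fst (isom d \<alpha>)"
abbreviation Uf where "Uf d \<alpha> \<equiv> snd (isom d \<alpha>)"
abbreviation dl where "dl \<equiv> approx isom"
abbreviation Kb :: "'d \<Rightarrow> 'd set" where "Kb x \<equiv> {k\<in>KD. k \<le> x}"

lemma alg_ty: "algebraic TYPE('d)"
  using init unfolding initial_solution_def bifinite_def by blast

lemma alg: "directed (Kb x)" "is_lub (Kb x) x"
  using alg_ty unfolding algebraic_def by blast+

lemma sol: "is_solution isom"
  using init unfolding initial_solution_def by blast

lemma bij: "bij_betw isom UNIV {g. \<forall>\<alpha>. g \<alpha> \<in> mixed_pd}"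
  using sol unfolding is_solution_def by blast

lemma ord_iff: "d \<le> d' \<longleftrightarrow> (\<forall>\<alpha>. Lf d \<alpha> \<subseteq> Lf d' \<alpha> \<and> Uf d' \<alpha> \<subseteq> Uf d \<alpha>)"
  using sol unfolding is_solution_def mixed_le_def by blast

lemma minv: "is_lub (range (\<lambda>n. dl n d)) d"
  using init unfolding initial_solution_def minimal_invariant_def by blast

lemma isom_in: "isom d \<alpha> \<in> mixed_pd"
  using bij unfolding bij_betw_def by blast

lemma isom_inv: "(\<And>\<alpha>. g \<alpha> \<in> mixed_pd) \<Longrightarrow> isom (inv isom g) = g"
proof -
  assume "\<And>\<alpha>. g \<alpha> \<in> mixed_pd"
  then have "g \<in> range isom" using bij unfolding bij_betw_def by simp
  then show ?thesis by (rule f_inv_into_f)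
qed

lemma isom_inj: "isom d = isom d' \<Longrightarrow> d = d'"
  using bij bij_betw_imp_inj_on injD by metis

lemma Kb_ne: "Kb x \<noteq> {}"
  using alg(1) unfolding directed_def by (rule conjunct1)

lemma le_by_Kb: "(\<And>k. k \<in> KD \<Longrightarrow> k \<le> x \<Longrightarrow> k \<le> y) \<Longrightarrow> (x::'d) \<le> y"
proof -
  assume h: "\<And>k. k \<in> KD \<Longrightarrow> k \<le> x \<Longrightarrow> k \<le> y"
  have "is_ub (Kb x) y" unfolding is_ub_def using h by blast
  then show ?thesis using alg(2)[of x] unfolding is_lub_def by blast
qed

lemma directed_finite_ub:
  assumes "directed S" "finite F" "F \<subseteq> S"
  shows "\<exists>z\<in>S. \<forall>x\<in>F. x \<le> z"
  using assms(2,3)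
proof (induction F rule: finite_induct)
  case empty then show ?case using assms(1) unfolding directed_def by blast
next
  case (insert a F)
  then obtain z where z: "z \<in> S" "\<forall>x\<in>F. x \<le> z" by blast
  moreover from insert have "a \<in> S" by blast
  ultimately obtain w where w: "w \<in> S" "a \<le> w" "z \<le> w" using assms(1) unfolding directed_def by blast
  have "\<forall>x\<in>insert a F. x \<le> w" using z(2) w order_trans by blast
  then show ?case using w(1) by blast
qed

lemma compactD: "k \<in> KD \<Longrightarrow> directed S \<Longrightarrow> is_lub S s \<Longrightarrow> k \<le> s \<Longrightarrow> \<exists>x\<in>S. k \<le> x"
  unfolding KD_def compact_el_def by blast

lemma mixed_pdD:
  assumes "(L, U) \<in> mixed_pd"
  shows "scott_closed L" "closedin lawson U" "upset U = U" "L = downset (L \<inter> U)"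
  using assms unfolding mixed_pd_def by auto

lemma down_closed_L: "y \<le> x \<Longrightarrow> x \<in> Lf d \<alpha> \<Longrightarrow> y \<in> Lf d \<alpha>"
proof -
  assume a: "y \<le> x" "x \<in> Lf d \<alpha>"
  obtain L U where e: "isom d \<alpha> = (L, U)" by fastforce
  then have "L = downset (L \<inter> U)" using mixed_pdD(4) isom_in by metis
  then show ?thesis using a e unfolding downset_def by (auto intro: order_trans)
qed

lemma up_closed_U: "x \<le> y \<Longrightarrow> x \<in> Uf d \<alpha> \<Longrightarrow> y \<in> Uf d \<alpha>"
proof -
  assume a: "x \<le> y" "x \<in> Uf d \<alpha>"
  obtain L U where e: "isom d \<alpha> = (L, U)" by fastforce
  then have "upset U = U" using mixed_pdD(3) isom_in by metis
  then show ?thesis using a e unfolding upset_def by auto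
qed

lemma L_mixed: "x \<in> Lf d \<alpha> \<Longrightarrow> \<exists>y. x \<le> y \<and> y \<in> Lf d \<alpha> \<and> y \<in> Uf d \<alpha>"
proof -
  assume a: "x \<in> Lf d \<alpha>"
  obtain L U where e: "isom d \<alpha> = (L, U)" by fastforce
  then have "L = downset (L \<inter> U)" using mixed_pdD(4) isom_in by metis
  then show ?thesis using a e unfolding downset_def by auto
qed

lemma U_closed: "closedin lawson (Uf d \<alpha>)"
  using isom_in[of d \<alpha>] mixed_pdD(2) by (metis prod.collapse)

lemma L_sclosed: "scott_closed (Lf d \<alpha>)"
  using isom_in[of d \<alpha>] mixed_pdD(1) by (metis prod.collapse)

section \<open>Scott topology\<close>

lemma scott_closed_iff:
  "scott_closed (C::'d set) \<longleftrightarrow> (\<forall>x y. y \<le> x \<longrightarrow> x \<in> C \<longrightarrow> y \<in> C) \<and> (\<forall>z. Kb z \<subseteq> C \<longrightarrow> z \<in> C)"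
proof
  assume "scott_closed C"
  then have eq: "- C = upset (- C \<inter> KD)" unfolding scott_closed_def scott_open_def by simp
  show "(\<forall>x y. y \<le> x \<longrightarrow> x \<in> C \<longrightarrow> y \<in> C) \<and> (\<forall>z. Kb z \<subseteq> C \<longrightarrow> z \<in> C)"
  proof (intro conjI allI impI)
    fix x y assume "y \<le> x" "x \<in> C"
    show "y \<in> C"
    proof (rule ccontr)
      assume "y \<notin> C"
      then have "y \<in> upset (- C \<inter> KD)" using eq by (metis ComplI)
      then have "x \<in> upset (- C \<inter> KD)" using \<open>y \<le> x\<close> order_trans unfolding upset_def by blast
      then show False using eq \<open>x \<in> C\<close> by (metis ComplD)
    qed
  next
    fix z assume "Kb z \<subseteq> C"
    show "z \<in> C"
    proof (rule ccontr)
      assume "z \<notin> C"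
      then have "z \<in> upset (- C \<inter> KD)" using eq by (metis ComplI)
      then show False using \<open>Kb z \<subseteq> C\<close> unfolding upset_def by blast
    qed
  qed
next
  assume h: "(\<forall>x y. y \<le> x \<longrightarrow> x \<in> C \<longrightarrow> y \<in> C) \<and> (\<forall>z. Kb z \<subseteq> C \<longrightarrow> z \<in> C)"
  have "- C = upset (- C \<inter> KD)"
  proof
    show "- C \<subseteq> upset (- C \<inter> KD)"
    proof
      fix z assume "z \<in> - C"
      then have "\<not> Kb z \<subseteq> C" using h by blast
      then show "z \<in> upset (- C \<inter> KD)" unfolding upset_def by blast
    qed
  next
    show "upset (- C \<inter> KD) \<subseteq> - C" using h unfolding upset_def by blast
  qed
  then show "scott_closed C" unfolding scott_closed_def scott_open_def by simp
qed

lemma scott_closed_Kbset: "scott_closed {z. Kb z \<subseteq> downset (X::'d set)}"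
  unfolding scott_closed_iff
proof (intro conjI allI impI)
  fix x y assume "y \<le> x" "x \<in> {z. Kb z \<subseteq> downset X}"
  then have "Kb y \<subseteq> Kb x" using order_trans by blast
  then show "y \<in> {z. Kb z \<subseteq> downset X}" using \<open>x \<in> _\<close> by blast
next
  fix z assume a: "Kb z \<subseteq> {z. Kb z \<subseteq> downset X}"
  have "k \<in> downset X" if "k \<in> Kb z" for k
  proof -
    have "Kb k \<subseteq> downset X" using a that by blast
    moreover have "k \<in> Kb k" using that by simp
    ultimately show ?thesis by blast
  qed
  then show "z \<in> {z. Kb z \<subseteq> downset X}" by blast
qed

lemma scott_closure_eq: "scott_closure (X::'d set) = {z. Kb z \<subseteq> downset X}"
proof -
  let ?C = "{z. Kb z \<subseteq> downset X}"
  have cl: "scott_closed ?C" by (rule scott_closed_Kbset)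
  have sub: "X \<subseteq> ?C" unfolding downset_def by blast
  have least: "?C \<subseteq> C" if "scott_closed C" "X \<subseteq> C" for C
  proof -
    have h: "(\<forall>x y. y \<le> x \<longrightarrow> x \<in> C \<longrightarrow> y \<in> C) \<and> (\<forall>z. Kb z \<subseteq> C \<longrightarrow> z \<in> C)"
      using that(1) by (simp only: scott_closed_iff)
    then have "downset X \<subseteq> C" using that(2) unfolding downset_def by blast
    then show ?thesis using h by blast
  qed
  show ?thesis unfolding scott_closure_def
  proof (rule subset_antisym)
    show "\<Inter> {C. scott_closed C \<and> X \<subseteq> C} \<subseteq> ?C" by (rule Inter_lower) (use cl sub in blast)
    show "?C \<subseteq> \<Inter> {C. scott_closed C \<and> X \<subseteq> C}" by (rule Inter_greatest) (use least in blast)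
  qed
qed

lemma scott_closed_closure: "scott_closed (scott_closure (X::'d set))"
  using scott_closed_Kbset scott_closure_eq by simp

lemma scott_closure_finite:
  assumes "finite (X::'d set)" shows "scott_closure X = downset X"
proof
  show "downset X \<subseteq> scott_closure X" unfolding scott_closure_eq downset_def
    using order_trans by blast
next
  show "scott_closure X \<subseteq> downset X"
  proof
    fix z assume "z \<in> scott_closure X"
    then have kz: "Kb z \<subseteq> downset X" unfolding scott_closure_eq by simp
    show "z \<in> downset X"
    proof (rule ccontr)
      assume nz: "z \<notin> downset X"
      have "\<forall>x\<in>X. \<exists>c. c \<in> Kb z \<and> \<not> c \<le> x"
      proof
        fix x assume "x \<in> X"
        show "\<exists>c. c \<in> Kb z \<and> \<not> c \<le> x"
        proof (rule ccontr)
          assume "\<not> (\<exists>c. c \<in> Kb z \<and> \<not> c \<le> x)"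
          then have "\<forall>c\<in>Kb z. c \<le> x" by blast
          then have "z \<le> x" using le_by_Kb[of z x] by blast
          then show False using nz \<open>x \<in> X\<close> unfolding downset_def by blast
        qed
      qed
      then have "\<exists>cf. \<forall>x\<in>X. cf x \<in> Kb z \<and> \<not> cf x \<le> x" by (rule bchoice)
      then obtain cf where cf: "\<forall>x\<in>X. cf x \<in> Kb z \<and> \<not> cf x \<le> x" by blast
      have "cf ` X \<subseteq> Kb z" using cf by blast
      then obtain c where c: "c \<in> Kb z" "\<forall>x\<in>cf ` X. x \<le> c"
        using directed_finite_ub[OF alg(1), of "cf ` X" z] assms by blast
      then have "c \<in> downset X" using kz by blast
      then obtain x where x: "x \<in> X" "c \<le> x" unfolding downset_def by blast
      then have "cf x \<le> c" using c(2) by blast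
      then have "cf x \<le> x" using x(2) by (rule order_trans)
      then show False using cf x(1) by blast
    qed
  qed
qed

section \<open>Lawson topology\<close>

definition lsub :: "'d set set" where
  "lsub = {upset {k} | k. k \<in> KD} \<union> {- upset {l} | l. l \<in> KD}"

lemma lawson_eq: "(lawson :: 'd topology) = topology_generated_by lsub"
  unfolding lawson_def lsub_def by simp

lemma topspace_lawson: "topspace (lawson :: 'd topology) = UNIV"
proof -
  have "x \<in> \<Union>lsub" for x :: 'd
  proof -
    obtain k where "k \<in> Kb x" using Kb_ne by blast
    then have "x \<in> upset {k}" "upset {k} \<in> lsub" unfolding upset_def lsub_def by auto
    then show ?thesis by blast
  qed
  then show ?thesis unfolding lawson_eq topology_generated_by_topspace by blast
qed

lemma closedin_lawson: "closedin lawson (F::'d set) \<longleftrightarrow> openin lawson (- F)"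
  unfolding closedin_def topspace_lawson by (simp add: Compl_eq_Diff_UNIV)

lemma open_up: "k \<in> KD \<Longrightarrow> openin lawson (upset {k::'d})"
  unfolding lawson_eq by (rule topology_generated_by_Basis) (auto simp: lsub_def)

lemma open_nup: "k \<in> KD \<Longrightarrow> openin lawson (- upset {k::'d})"
  unfolding lawson_eq by (rule topology_generated_by_Basis) (auto simp: lsub_def)

lemma closed_up: "k \<in> KD \<Longrightarrow> closedin lawson (upset {k::'d})"
  unfolding closedin_lawson by (rule open_nup)

lemma upset_Union: "upset X = (\<Union>x\<in>X. upset {x})"
  unfolding upset_def by blast

lemma open_upset_KD: "X \<subseteq> KD \<Longrightarrow> openin lawson (upset (X::'d set))"
  unfolding upset_Union[of X] using open_up by (intro openin_Union) blast

lemma scott_open_lawson: "scott_open (U::'d set) \<Longrightarrow> openin lawson U"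
  unfolding scott_open_def by (metis inf_le2 open_upset_KD)

lemma scott_closed_lawson: "scott_closed (C::'d set) \<Longrightarrow> closedin lawson C"
  unfolding closedin_lawson scott_closed_def by (rule scott_open_lawson)

lemma closed_up_any: "closedin lawson (upset {x::'d})"
proof -
  have "upset {x} = (\<Inter>k\<in>Kb x. upset {k})"
  proof
    show "upset {x} \<subseteq> (\<Inter>k\<in>Kb x. upset {k})" unfolding upset_def using order_trans by blast
    show "(\<Inter>k\<in>Kb x. upset {k}) \<subseteq> upset {x}"
    proof
      fix y assume "y \<in> (\<Inter>k\<in>Kb x. upset {k})"
      then have "\<And>k. k \<in> KD \<Longrightarrow> k \<le> x \<Longrightarrow> k \<le> y" unfolding upset_def by blast
      then have "x \<le> y" by (rule le_by_Kb)
      then show "y \<in> upset {x}" unfolding upset_def by blast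
    qed
  qed
  moreover have "closedin lawson (\<Inter>k\<in>Kb x. upset {k})"
    by (rule closedin_INT) (use Kb_ne closed_up in blast)+
  ultimately show ?thesis by simp
qed

lemma closed_upset_finite: "finite X \<Longrightarrow> closedin lawson (upset (X::'d set))"
  unfolding upset_Union[of X] by (rule closedin_Union) (use closed_up_any in blast)+

lemma closed_upset_KD_finite: "finite X \<Longrightarrow> X \<subseteq> KD \<Longrightarrow> openin lawson (- upset (X::'d set))"
  using closed_upset_finite closedin_lawson by blast

definition nb :: "'d set \<Rightarrow> 'd set \<Rightarrow> 'd set" where
  "nb Cs Ls = {z. (\<forall>c\<in>Cs. c \<le> z) \<and> (\<forall>l\<in>Ls. \<not> l \<le> z)}"

lemma nb_Int: "nb Cs Ls \<inter> nb Cs' Ls' = nb (Cs \<union> Cs') (Ls \<union> Ls')"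
  unfolding nb_def by blast

lemma nbhd_gen:
  assumes "generate_topology_on lsub U" "y \<in> U"
  shows "\<exists>Cs Ls. finite Cs \<and> finite Ls \<and> Cs \<subseteq> KD \<and> Ls \<subseteq> KD \<and> y \<in> nb Cs Ls \<and> nb Cs Ls \<subseteq> U"
  using assms
proof (induction arbitrary: y rule: generate_topology_on.induct)
  case Empty then show ?case by simp
next
  case (Int a b)
  then obtain Cs Ls Cs' Ls' where
    "finite Cs \<and> finite Ls \<and> Cs \<subseteq> KD \<and> Ls \<subseteq> KD \<and> y \<in> nb Cs Ls \<and> nb Cs Ls \<subseteq> a"
    "finite Cs' \<and> finite Ls' \<and> Cs' \<subseteq> KD \<and> Ls' \<subseteq> KD \<and> y \<in> nb Cs' Ls' \<and> nb Cs' Ls' \<subseteq> b"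
    by (meson IntD1 IntD2)
  then show ?case
    by (intro exI[of _ "Cs \<union> Cs'"] exI[of _ "Ls \<union> Ls'"]) (simp add: nb_Int[symmetric], blast)
next
  case (UN K)
  then obtain k where k: "k \<in> K" "y \<in> k" by blast
  then obtain Cs Ls where "finite Cs \<and> finite Ls \<and> Cs \<subseteq> KD \<and> Ls \<subseteq> KD \<and> y \<in> nb Cs Ls \<and> nb Cs Ls \<subseteq> k"
    using UN.IH[of k y] by blast
  then show ?case using \<open>k \<in> K\<close> by blast
next
  case (Basis s)
  then consider k where "k \<in> KD" "s = upset {k}" | l where "l \<in> KD" "s = - upset {l}"
    unfolding lsub_def by blast
  then show ?case
  proof cases
    case 1
    then show ?thesis using Basis.prems
      by (intro exI[of _ "{k}"] exI[of _ "{}"]) (auto simp: nb_def upset_def)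
  next
    case 2
    then show ?thesis using Basis.prems
      by (intro exI[of _ "{}"] exI[of _ "{l}"]) (auto simp: nb_def upset_def)
  qed
qed

lemma nbhd:
  assumes "openin lawson U" "y \<in> U"
  shows "\<exists>Cs Ls. finite Cs \<and> finite Ls \<and> Cs \<subseteq> KD \<and> Ls \<subseteq> KD \<and> y \<in> nb Cs Ls \<and> nb Cs Ls \<subseteq> U"
  using assms nbhd_gen unfolding lawson_eq openin_topology_generated_by_iff by blast

section \<open>Approximations\<close>

lemma finite_funs: "finite (B::'b set) \<Longrightarrow> finite {g::'act \<Rightarrow> 'b. \<forall>\<alpha>. g \<alpha> \<in> B}"
  using finite_set_of_finite_funs[of "UNIV::'act set" B] by simp

lemma upset_upset: "upset (upset X) = upset (X::'d set)"
  unfolding upset_def using order_trans by blast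

lemma downset_downset: "downset (downset X) = downset (X::'d set)"
  unfolding downset_def using order_trans by blast

lemma bot_in: "({}, UNIV) \<in> (mixed_pd :: ('d set \<times> 'd set) set)"
proof -
  have "scott_closed ({}::'d set)" unfolding scott_closed_iff using Kb_ne by blast
  moreover have "closedin lawson (UNIV::'d set)" by (metis closedin_topspace topspace_lawson)
  moreover have "upset (UNIV::'d set) = UNIV" unfolding upset_def by blast
  moreover have "({}::'d set) = downset ({} \<inter> UNIV)" unfolding downset_def by blast
  ultimately show ?thesis unfolding mixed_pd_def by blast
qed

lemma isom_dl0: "isom (dl 0 d) = (\<lambda>\<alpha>. ({}, UNIV))"
  using isom_inv[of "\<lambda>\<alpha>. ({}, UNIV)"] bot_in by simp

lemma dl0_le: "dl 0 d \<le> x"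
  unfolding ord_iff isom_dl0 by simp

lemma mm_in:
  assumes mono: "\<And>x y. x \<le> y \<Longrightarrow> f x \<le> (f y::'d)" and fin: "finite (range f)"
  shows "(downset (f ` Lf d \<alpha>), upset (f ` Uf d \<alpha>)) \<in> mixed_pd"
proof -
  have f1: "finite (f ` Lf d \<alpha>)" "finite (f ` Uf d \<alpha>)"
    using fin by (meson finite_subset image_mono subset_UNIV)+
  have "scott_closed (downset (f ` Lf d \<alpha>))"
    by (metis scott_closed_closure scott_closure_finite f1(1))
  moreover have "closedin lawson (upset (f ` Uf d \<alpha>))" using closed_upset_finite f1(2) by blast
  moreover have "upset (upset (f ` Uf d \<alpha>)) = upset (f ` Uf d \<alpha>)" by (rule upset_upset)
  moreover have "downset (f ` Lf d \<alpha>) = downset (downset (f ` Lf d \<alpha>) \<inter> upset (f ` Uf d \<alpha>))"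
  proof
    show "downset (f ` Lf d \<alpha>) \<subseteq> downset (downset (f ` Lf d \<alpha>) \<inter> upset (f ` Uf d \<alpha>))"
    proof
      fix z assume "z \<in> downset (f ` Lf d \<alpha>)"
      then obtain l where l: "l \<in> Lf d \<alpha>" "z \<le> f l" unfolding downset_def by blast
      then obtain u where u: "l \<le> u" "u \<in> Lf d \<alpha>" "u \<in> Uf d \<alpha>" using L_mixed by blast
      have "f l \<le> f u" using mono u(1) .
      then have "z \<le> f u" using l(2) by (rule order_trans[rotated])
      moreover have "f u \<in> downset (f ` Lf d \<alpha>)" using u(2) unfolding downset_def by blast
      moreover have "f u \<in> upset (f ` Uf d \<alpha>)" using u(3) unfolding upset_def by blast
      ultimately show "z \<in> downset (downset (f ` Lf d \<alpha>) \<inter> upset (f ` Uf d \<alpha>))"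
        unfolding downset_def by blast
    qed
    show "downset (downset (f ` Lf d \<alpha>) \<inter> upset (f ` Uf d \<alpha>)) \<subseteq> downset (f ` Lf d \<alpha>)"
      using downset_downset[of "f ` Lf d \<alpha>"] unfolding downset_def by blast
  qed
  ultimately show ?thesis unfolding mixed_pd_def by blast
qed

lemma isom_step:
  assumes mono: "\<And>x y. x \<le> y \<Longrightarrow> dl n x \<le> dl n y" and fin: "finite (range (dl n))"
  shows "isom (dl (Suc n) d) \<alpha> = (downset (dl n ` Lf d \<alpha>), upset (dl n ` Uf d \<alpha>))"
proof -
  have fl: "finite (dl n ` Lf d \<beta>)" for \<beta>
    using fin by (meson finite_subset image_mono subset_UNIV)
  have mm: "mixed_map (dl n) (isom d \<beta>) = (downset (dl n ` Lf d \<beta>), upset (dl n ` Uf d \<beta>))" for \<beta>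
    unfolding mixed_map_def using scott_closure_finite[OF fl] by simp
  have "dl (Suc n) d = inv isom (\<lambda>\<beta>. (downset (dl n ` Lf d \<beta>), upset (dl n ` Uf d \<beta>)))"
    using mm by (simp add: approx_step_def)
  moreover have "isom (inv isom (\<lambda>\<beta>. (downset (dl n ` Lf d \<beta>), upset (dl n ` Uf d \<beta>))))
     = (\<lambda>\<beta>. (downset (dl n ` Lf d \<beta>), upset (dl n ` Uf d \<beta>)))"
    by (rule isom_inv) (rule mm_in[OF mono fin])
  ultimately show ?thesis by simp
qed

lemma dl_props: "(\<forall>x y. x \<le> y \<longrightarrow> dl n x \<le> dl n y) \<and> (\<forall>x. dl n x \<le> x) \<and>
   (\<forall>x. dl n (dl n x) = dl n x) \<and> finite (range (dl n))"
proof (induction n)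
  case 0
  have "range (dl 0) = {inv isom (\<lambda>\<alpha>. ({}, UNIV))}" by auto
  then show ?case using dl0_le by simp
next
  case (Suc n)
  let ?f = "dl n"
  have mono: "\<And>x y. x \<le> y \<Longrightarrow> ?f x \<le> ?f y" and defl: "\<And>x. ?f x \<le> x"
    and idem: "\<And>x. ?f (?f x) = ?f x" and fin: "finite (range ?f)" using Suc.IH by blast+
  note st = isom_step[OF mono fin]
  have mono': "dl (Suc n) x \<le> dl (Suc n) y" if "x \<le> y" for x y
  proof -
    have h: "\<And>\<alpha>. Lf x \<alpha> \<subseteq> Lf y \<alpha> \<and> Uf y \<alpha> \<subseteq> Uf x \<alpha>" using that ord_iff by blast
    have "Lf (dl (Suc n) x) \<alpha> \<subseteq> Lf (dl (Suc n) y) \<alpha> \<and> Uf (dl (Suc n) y) \<alpha> \<subseteq> Uf (dl (Suc n) x) \<alpha>" for \<alpha>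
    proof -
      have "downset (?f ` Lf x \<alpha>) \<subseteq> downset (?f ` Lf y \<alpha>)" using h[of \<alpha>] unfolding downset_def by blast
      moreover have "upset (?f ` Uf y \<alpha>) \<subseteq> upset (?f ` Uf x \<alpha>)" using h[of \<alpha>] unfolding upset_def by blast
      ultimately show ?thesis using st[of x \<alpha>] st[of y \<alpha>] by simp
    qed
    then show ?thesis unfolding ord_iff by blast
  qed
  have defl': "dl (Suc n) x \<le> x" for x
  proof -
    have "downset (?f ` Lf x \<alpha>) \<subseteq> Lf x \<alpha>" for \<alpha>
    proof
      fix z assume "z \<in> downset (?f ` Lf x \<alpha>)"
      then obtain l where "l \<in> Lf x \<alpha>" "z \<le> ?f l" unfolding downset_def by blast
      then show "z \<in> Lf x \<alpha>" using defl[of l] down_closed_L order_trans by metis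
    qed
    moreover have "Uf x \<alpha> \<subseteq> upset (?f ` Uf x \<alpha>)" for \<alpha>
      unfolding upset_def using defl by blast
    ultimately show ?thesis unfolding ord_iff using st[of x] by simp
  qed
  have idem': "dl (Suc n) (dl (Suc n) x) = dl (Suc n) x" for x
  proof -
    have a: "downset (?f ` downset (?f ` L)) = downset (?f ` L)" for L
    proof
      show "downset (?f ` downset (?f ` L)) \<subseteq> downset (?f ` L)"
      proof
        fix z assume "z \<in> downset (?f ` downset (?f ` L))"
        then obtain y l where "z \<le> ?f y" "y \<le> ?f l" "l \<in> L" unfolding downset_def by blast
        then have "z \<le> ?f l" using mono[of y "?f l"] idem[of l] order_trans by metis
        then show "z \<in> downset (?f ` L)" using \<open>l \<in> L\<close> unfolding downset_def by blast
      qed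
      show "downset (?f ` L) \<subseteq> downset (?f ` downset (?f ` L))"
      proof
        fix z assume "z \<in> downset (?f ` L)"
        then obtain l where "z \<le> ?f l" "l \<in> L" unfolding downset_def by blast
        moreover have "?f l \<in> downset (?f ` L)" using \<open>l \<in> L\<close> unfolding downset_def by blast
        ultimately show "z \<in> downset (?f ` downset (?f ` L))" using idem[of l] unfolding downset_def
          by (metis (mono_tags, lifting) image_eqI mem_Collect_eq)
      qed
    qed
    have b: "upset (?f ` upset (?f ` U)) = upset (?f ` U)" for U
    proof
      show "upset (?f ` upset (?f ` U)) \<subseteq> upset (?f ` U)"
      proof
        fix z assume "z \<in> upset (?f ` upset (?f ` U))"
        then obtain y u where "?f y \<le> z" "?f u \<le> y" "u \<in> U" unfolding upset_def by blast
        then have "?f u \<le> z" using mono[of "?f u" y] idem[of u] order_trans by metis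
        then show "z \<in> upset (?f ` U)" using \<open>u \<in> U\<close> unfolding upset_def by blast
      qed
      show "upset (?f ` U) \<subseteq> upset (?f ` upset (?f ` U))"
      proof
        fix z assume "z \<in> upset (?f ` U)"
        then obtain u where "?f u \<le> z" "u \<in> U" unfolding upset_def by blast
        moreover have "?f u \<in> upset (?f ` U)" using \<open>u \<in> U\<close> unfolding upset_def by blast
        ultimately show "z \<in> upset (?f ` upset (?f ` U))" using idem[of u] unfolding upset_def
          by (metis (mono_tags, lifting) image_eqI mem_Collect_eq)
      qed
    qed
    show ?thesis
    proof (rule isom_inj, rule ext)
      fix \<alpha>
      show "isom (dl (Suc n) (dl (Suc n) x)) \<alpha> = isom (dl (Suc n) x) \<alpha>"
        using st[of "dl (Suc n) x" \<alpha>] st[of x \<alpha>] a b by simp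
    qed
  qed
  have fin': "finite (range (dl (Suc n)))"
  proof -
    let ?B = "(downset ` Pow (range ?f)) \<times> (upset ` Pow (range ?f))"
    have "finite ?B" using fin by simp
    then have "finite {g::'act \<Rightarrow> _. \<forall>\<alpha>. g \<alpha> \<in> ?B}" by (rule finite_funs)
    moreover have "range (dl (Suc n)) \<subseteq> inv isom ` {g. \<forall>\<alpha>. g \<alpha> \<in> ?B}"
    proof
      fix e assume "e \<in> range (dl (Suc n))"
      then obtain d where e: "e = dl (Suc n) d" by blast
      have "isom e \<alpha> \<in> ?B" for \<alpha> using st[of d \<alpha>] e by auto
      then have "isom e \<in> {g. \<forall>\<alpha>. g \<alpha> \<in> ?B}" by blast
      moreover have "e = inv isom (isom e)" using bij bij_betw_imp_inj_on inv_f_f by metis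
      ultimately show "e \<in> inv isom ` {g. \<forall>\<alpha>. g \<alpha> \<in> ?B}" by blast
    qed
    ultimately show ?thesis using finite_subset by blast
  qed
  show ?case using mono' defl' idem' fin' by blast
qed

lemma dl_mono: "x \<le> y \<Longrightarrow> dl n x \<le> dl n y" using dl_props by blast
lemma dl_defl: "dl n x \<le> x" using dl_props by blast
lemma dl_idem: "dl n (dl n x) = dl n x" using dl_props by blast
lemma dl_fin: "finite (range (dl n))" using dl_props by blast

lemma isom_dlS: "isom (dl (Suc n) d) \<alpha> = (downset (dl n ` Lf d \<alpha>), upset (dl n ` Uf d \<alpha>))"
  by (rule isom_step) (use dl_mono dl_fin in auto)

lemma dl0_const: "dl 0 x = dl 0 y" by simp

lemma dl_chain: "dl n x \<le> dl (Suc n) x"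
proof (induction n arbitrary: x)
  case 0 show ?case by (rule dl0_le)
next
  case (Suc n)
  have "Lf (dl (Suc n) x) \<alpha> \<subseteq> Lf (dl (Suc (Suc n)) x) \<alpha> \<and> Uf (dl (Suc (Suc n)) x) \<alpha> \<subseteq> Uf (dl (Suc n) x) \<alpha>" for \<alpha>
  proof -
    have "downset (dl n ` Lf x \<alpha>) \<subseteq> downset (dl (Suc n) ` Lf x \<alpha>)"
      unfolding downset_def using Suc.IH order_trans by blast
    moreover have "upset (dl (Suc n) ` Uf x \<alpha>) \<subseteq> upset (dl n ` Uf x \<alpha>)"
      unfolding upset_def using Suc.IH order_trans by blast
    ultimately show ?thesis using isom_dlS[of n x \<alpha>] isom_dlS[of "Suc n" x \<alpha>] by simp
  qed
  then show ?case unfolding ord_iff by blast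
qed

lemma dl_chain_le: "m \<le> n \<Longrightarrow> dl m x \<le> dl n x"
  using lift_Suc_mono_le[of "\<lambda>n. dl n x"] dl_chain by blast

lemma dl_absorb: "dl n (dl (Suc n) x) = dl n x"
proof (induction n arbitrary: x)
  case 0 show ?case by simp
next
  case (Suc n)
  let ?f = "dl n" and ?g = "dl (Suc n)"
  have a: "downset (?f ` downset (?g ` L)) = downset (?f ` L)" for L
  proof
    show "downset (?f ` downset (?g ` L)) \<subseteq> downset (?f ` L)"
    proof
      fix z assume "z \<in> downset (?f ` downset (?g ` L))"
      then obtain y l where "z \<le> ?f y" "y \<le> ?g l" "l \<in> L" unfolding downset_def by blast
      then have "z \<le> ?f l" using dl_mono[of y "?g l" n] Suc.IH[of l] order_trans by metis
      then show "z \<in> downset (?f ` L)" using \<open>l \<in> L\<close> unfolding downset_def by blast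
    qed
    show "downset (?f ` L) \<subseteq> downset (?f ` downset (?g ` L))"
    proof
      fix z assume "z \<in> downset (?f ` L)"
      then obtain l where "z \<le> ?f l" "l \<in> L" unfolding downset_def by blast
      moreover have "?g l \<in> downset (?g ` L)" using \<open>l \<in> L\<close> unfolding downset_def by blast
      ultimately show "z \<in> downset (?f ` downset (?g ` L))" using Suc.IH[of l] unfolding downset_def
        by (metis (mono_tags, lifting) image_eqI mem_Collect_eq)
    qed
  qed
  have b: "upset (?f ` upset (?g ` U)) = upset (?f ` U)" for U
  proof
    show "upset (?f ` upset (?g ` U)) \<subseteq> upset (?f ` U)"
    proof
      fix z assume "z \<in> upset (?f ` upset (?g ` U))"
      then obtain y u where "?f y \<le> z" "?g u \<le> y" "u \<in> U" unfolding upset_def by blast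
      then have "?f u \<le> z" using dl_mono[of "?g u" y n] Suc.IH[of u] order_trans by metis
      then show "z \<in> upset (?f ` U)" using \<open>u \<in> U\<close> unfolding upset_def by blast
    qed
    show "upset (?f ` U) \<subseteq> upset (?f ` upset (?g ` U))"
    proof
      fix z assume "z \<in> upset (?f ` U)"
      then obtain u where "?f u \<le> z" "u \<in> U" unfolding upset_def by blast
      moreover have "?g u \<in> upset (?g ` U)" using \<open>u \<in> U\<close> unfolding upset_def by blast
      ultimately show "z \<in> upset (?f ` upset (?g ` U))" using Suc.IH[of u] unfolding upset_def
        by (metis (mono_tags, lifting) image_eqI mem_Collect_eq)
    qed
  qed
  show ?case
  proof (rule isom_inj, rule ext)
    fix \<alpha>
    show "isom (dl (Suc n) (dl (Suc (Suc n)) x)) \<alpha> = isom (dl (Suc n) x) \<alpha>"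
      using isom_dlS[of n "dl (Suc (Suc n)) x" \<alpha>] isom_dlS[of "Suc n" x \<alpha>] isom_dlS[of n x \<alpha>] a b by simp
  qed
qed

lemma chain_directed:
  assumes "\<And>i. p i \<le> p (Suc i)" shows "directed (range (p :: nat \<Rightarrow> 'e::order))"
  unfolding directed_def
proof (intro conjI ballI)
  show "range p \<noteq> {}" by blast
  fix x y assume "x \<in> range p" "y \<in> range p"
  then obtain i j where "x = p i" "y = p j" by blast
  moreover have "p i \<le> p (max i j)" "p j \<le> p (max i j)"
    using lift_Suc_mono_le[of p] assms by (metis max.cobounded1 max.cobounded2)+
  ultimately show "\<exists>z\<in>range p. x \<le> z \<and> y \<le> z" by blast
qed

lemma dcpo_ty: "dcpo TYPE('d)"
  using alg_ty unfolding algebraic_def by blast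

lemma lub_ex: "directed (S::'d set) \<Longrightarrow> \<exists>u. is_lub S u"
  using dcpo_ty unfolding dcpo_def by blast

lemma compact_le_chain:
  assumes "\<And>i. p i \<le> p (Suc i)" "is_lub (range p) y" "c \<in> KD" "c \<le> (y::'d)"
  shows "\<exists>i0. \<forall>i\<ge>i0. c \<le> p i"
proof -
  obtain x where "x \<in> range p" "c \<le> x" using compactD[OF assms(3) chain_directed[of p, OF assms(1)] assms(2,4)] by blast
  then obtain i0 where "c \<le> p i0" by blast
  then have "\<forall>i\<ge>i0. c \<le> p i" using lift_Suc_mono_le[of p] assms(1) order_trans by metis
  then show ?thesis by blast
qed

lemma compact_fix: "k \<in> KD \<Longrightarrow> \<exists>i0. \<forall>i\<ge>i0. dl i k = k"
proof -
  assume k: "k \<in> KD"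
  obtain i0 where "\<forall>i\<ge>i0. k \<le> dl i k"
    using compact_le_chain[of "\<lambda>i. dl i k" k k] dl_chain minv k by blast
  then have "\<forall>i\<ge>i0. dl i k = k" using dl_defl antisym by blast
  then show ?thesis by blast
qed

lemma finite_nat_bound: "finite (A::'x set) \<Longrightarrow> \<forall>a\<in>A. \<exists>i0::nat. \<forall>i\<ge>i0. Q a i \<Longrightarrow> \<exists>N. \<forall>a\<in>A. \<forall>i\<ge>N. Q a i"
proof (induction A rule: finite_induct)
  case empty then show ?case by blast
next
  case (insert x F)
  then obtain N where N: "\<forall>a\<in>F. \<forall>i\<ge>N. Q a i" by blast
  obtain M where M: "\<forall>i\<ge>M. Q x i" using insert.prems by blast
  have "\<forall>a\<in>insert x F. \<forall>i\<ge>max N M. Q a i" using N M by simp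
  then show ?case by blast
qed

section \<open>Lawson compactness\<close>

lemma lawson_fip:
  assumes ne: "\<F> \<noteq> {}" and cl: "\<forall>F\<in>\<F>. closedin lawson F \<and> F \<noteq> {}"
    and filt: "\<forall>F1\<in>\<F>. \<forall>F2\<in>\<F>. \<exists>F3\<in>\<F>. F3 \<subseteq> F1 \<inter> F2"
  shows "\<Inter>\<F> \<noteq> ({}::'d set)"
proof -
  define P where "P i = (\<Inter>F\<in>\<F>. dl i ` F)" for i
  have stab: "\<exists>F0\<in>\<F>. dl i ` F0 = P i" for i
  proof -
    obtain F1 where "F1 \<in> \<F>" using ne by blast
    then have "\<exists>F0. F0 \<in> \<F> \<and> (\<forall>F. F \<in> \<F> \<longrightarrow> card (dl i ` F0) \<le> card (dl i ` F))"
      by (rule ex_has_least_nat[where P="\<lambda>F. F \<in> \<F>" and m="\<lambda>F. card (dl i ` F)"])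
    then obtain F0 where F0c: "F0 \<in> \<F> \<and> (\<forall>F. F \<in> \<F> \<longrightarrow> card (dl i ` F0) \<le> card (dl i ` F))" ..
    note F0 = conjunct1[OF F0c] conjunct2[OF F0c]
    have "dl i ` F0 \<subseteq> dl i ` F" if FF: "F \<in> \<F>" for F
    proof -
      obtain F3 where F3: "F3 \<in> \<F>" "F3 \<subseteq> F \<inter> F0" using filt[rule_format, OF FF F0(1)] by blast
      have fin: "finite (dl i ` F0)" using dl_fin[of i] by (meson finite_subset image_mono subset_UNIV)
      have sub: "dl i ` F3 \<subseteq> dl i ` F0" using F3(2) by blast
      have c1: "card (dl i ` F0) \<le> card (dl i ` F3)" by (rule F0(2)[rule_format, OF F3(1)])
      have "card (dl i ` F3) = card (dl i ` F0)" using card_mono[OF fin sub] c1 by linarith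
      then have eq: "dl i ` F3 = dl i ` F0" by (rule card_subset_eq[OF fin sub])
      have "dl i ` F3 \<subseteq> dl i ` F" using F3(2) by (intro image_mono) blast
      then show ?thesis using eq by simp
    qed
    then have "dl i ` F0 \<subseteq> P i" unfolding P_def by blast
    moreover have "P i \<subseteq> dl i ` F0" unfolding P_def using F0(1) by blast
    ultimately show ?thesis using F0(1) by blast
  qed
  have Pne: "P i \<noteq> {}" for i
  proof -
    obtain F0 where "F0 \<in> \<F>" "dl i ` F0 = P i" using stab by blast
    then show ?thesis using cl by blast
  qed
  have surj: "\<exists>q. q \<in> P (Suc i) \<and> dl i q = p" if "p \<in> P i" for p i
  proof -
    obtain F0 where F0: "F0 \<in> \<F>" "dl (Suc i) ` F0 = P (Suc i)" using stab by blast
    have "p \<in> dl i ` F0" using that F0(1) unfolding P_def by blast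
    then obtain f where f: "f \<in> F0" "p = dl i f" by blast
    have "dl (Suc i) f \<in> P (Suc i)" using F0(2) f(1) by blast
    moreover have "dl i (dl (Suc i) f) = p" using f(2) dl_absorb by simp
    ultimately show ?thesis by blast
  qed
  define p where "p = rec_nat (SOME x. x \<in> P 0) (\<lambda>i x. SOME q. q \<in> P (Suc i) \<and> dl i q = x)"
  have p0: "p 0 = (SOME x. x \<in> P 0)" and pS: "p (Suc i) = (SOME q. q \<in> P (Suc i) \<and> dl i q = p i)" for i
    unfolding p_def by simp_all
  have pP: "p i \<in> P i" for i
  proof (induction i)
    case 0 show ?case unfolding p0 using Pne[of 0] by (simp add: some_in_eq)
  next
    case (Suc i)
    show ?case unfolding pS using someI_ex[OF surj[OF Suc.IH]] by blast
  qed
  have pdl: "dl i (p (Suc i)) = p i" for i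
    unfolding pS using someI_ex[OF surj[OF pP[of i]]] by blast
  have pch: "p i \<le> p (Suc i)" for i using pdl[of i] dl_defl[of i "p (Suc i)"] by simp
  obtain y where y: "is_lub (range p) y" using lub_ex[OF chain_directed[of p, OF pch]] by blast
  have "y \<in> F" if F: "F \<in> \<F>" for F
  proof (rule ccontr)
    assume "y \<notin> F"
    then have yF: "y \<in> - F" by blast
    have oF: "openin lawson (- F)" using closedin_lawson[THEN iffD1] cl[rule_format, OF F, THEN conjunct1] .
    obtain Cs Ls where CL: "finite Cs" "finite Ls" "Cs \<subseteq> KD" "Ls \<subseteq> KD" "y \<in> nb Cs Ls" "nb Cs Ls \<subseteq> - F"
      using nbhd[OF oF yF] by blast
    have "\<forall>c\<in>Cs. \<exists>i0. \<forall>i\<ge>i0. c \<le> p i"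
    proof
      fix c assume "c \<in> Cs"
      then have "c \<in> KD" "c \<le> y" using CL(3,5) unfolding nb_def by blast+
      then show "\<exists>i0. \<forall>i\<ge>i0. c \<le> p i" using compact_le_chain[of p y, OF pch y] by blast
    qed
    then have "\<exists>N. \<forall>c\<in>Cs. \<forall>i\<ge>N. c \<le> p i"
      by (rule finite_nat_bound[OF CL(1), where Q="\<lambda>c i. c \<le> p i"])
    then obtain N1 where N1: "\<forall>c\<in>Cs. \<forall>i\<ge>N1. c \<le> p i" by blast
    have "\<forall>l\<in>Ls. \<exists>i0. \<forall>i\<ge>i0. dl i l = l" using CL(4) compact_fix by blast
    then have "\<exists>N. \<forall>l\<in>Ls. \<forall>i\<ge>N. dl i l = l"
      by (rule finite_nat_bound[OF CL(2), where Q="\<lambda>l i. dl i l = l"])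
    then obtain N2 where N2: "\<forall>l\<in>Ls. \<forall>i\<ge>N2. dl i l = l" by blast
    define N where "N = max N1 N2"
    have "p N \<in> dl N ` F" using pP[of N] F unfolding P_def by blast
    then obtain f where f: "f \<in> F" "p N = dl N f" by blast
    have pNy: "p N \<le> y" using y unfolding is_lub_def is_ub_def by blast
    have "f \<in> nb Cs Ls" unfolding nb_def
    proof (intro CollectI conjI ballI)
      fix c assume "c \<in> Cs"
      then have "c \<le> p N" using N1 N_def by simp
      then show "c \<le> f" using f(2) dl_defl[of N f] order_trans by metis
    next
      fix l assume l: "l \<in> Ls"
      show "\<not> l \<le> f"
      proof
        assume "l \<le> f"
        then have "dl N l \<le> dl N f" by (rule dl_mono)
        moreover have "dl N l = l" using N2 l N_def by simp
        ultimately have "l \<le> y" using f(2) pNy order_trans by metis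
        then show False using CL(5) l unfolding nb_def by blast
      qed
    qed
    then show False using CL(6) f(1) by blast
  qed
  then show ?thesis by blast
qed

section \<open>Directed lubs\<close>

lemma sub_closure: "X \<subseteq> scott_closure (X::'d set)"
  unfolding scott_closure_eq downset_def by blast

lemma compact_in_closure: "c \<in> KD \<Longrightarrow> c \<in> scott_closure (X::'d set) \<Longrightarrow> c \<in> downset X"
  unfolding scott_closure_eq by blast

lemma closure_down: "y \<le> z \<Longrightarrow> z \<in> scott_closure (X::'d set) \<Longrightarrow> y \<in> scott_closure X"
  using scott_closed_closure[of X] unfolding scott_closed_iff by blast

lemma directed_ne: "directed S \<Longrightarrow> S \<noteq> {}"
  unfolding directed_def by blast

lemma directed_ub2: "directed S \<Longrightarrow> x \<in> S \<Longrightarrow> y \<in> S \<Longrightarrow> \<exists>z\<in>S. x \<le> z \<and> y \<le> z"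
  unfolding directed_def by blast

lemma ord_L: "x \<le> y \<Longrightarrow> Lf x \<alpha> \<subseteq> Lf y \<alpha>" using ord_iff by blast
lemma ord_U: "x \<le> y \<Longrightarrow> Uf y \<alpha> \<subseteq> Uf x \<alpha>" using ord_iff by blast

lemma lub_upper:
  assumes dir: "directed S" and s: "is_lub S s"
  shows "Lf s \<alpha> \<subseteq> scott_closure (\<Union>x\<in>S. Lf x \<alpha>) \<and> (\<Inter>x\<in>S. Uf x \<alpha>) \<subseteq> Uf s \<alpha>"
proof -
  define Ls where "Ls \<beta> = scott_closure (\<Union>x\<in>S. Lf x \<beta>)" for \<beta>
  define Us where "Us \<beta> = (\<Inter>x\<in>S. Uf x \<beta>)" for \<beta>
  have Sne: "S \<noteq> {}" using dir by (rule directed_ne)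
  have mem: "(Ls \<beta>, Us \<beta>) \<in> mixed_pd" for \<beta>
  proof -
    have c1: "scott_closed (Ls \<beta>)" unfolding Ls_def by (rule scott_closed_closure)
    have c2: "closedin lawson (Us \<beta>)" unfolding Us_def
      by (rule closedin_INT) (use Sne U_closed in blast)+
    have c3: "upset (Us \<beta>) = Us \<beta>" unfolding Us_def upset_def using up_closed_U by blast
    have c4: "Ls \<beta> \<subseteq> downset (Ls \<beta> \<inter> Us \<beta>)"
    proof
      fix z assume z: "z \<in> Ls \<beta>"
      define \<F> where "\<F> = {upset {c} \<inter> Ls \<beta> \<inter> Uf x \<beta> | c x. c \<in> Kb z \<and> x \<in> S}"
      have Fne: "\<F> \<noteq> {}" unfolding \<F>_def using Kb_ne[of z] Sne by blast
      have Fcl: "\<forall>F\<in>\<F>. closedin lawson F \<and> F \<noteq> {}"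
      proof
        fix F assume "F \<in> \<F>"
        then obtain c x where cx: "F = upset {c} \<inter> Ls \<beta> \<inter> Uf x \<beta>" "c \<in> Kb z" "x \<in> S"
          unfolding \<F>_def by blast
        have "closedin lawson (upset {c})" using cx(2) closed_up by blast
        moreover have "closedin lawson (Ls \<beta>)" using c1 by (rule scott_closed_lawson)
        moreover have "closedin lawson (Uf x \<beta>)" by (rule U_closed)
        ultimately have cF: "closedin lawson F" unfolding cx(1) by (intro closedin_Int)
        have "c \<in> Ls \<beta>" using closure_down[of c z] z cx(2) unfolding Ls_def by blast
        then have "c \<in> downset (\<Union>x\<in>S. Lf x \<beta>)" using compact_in_closure cx(2) unfolding Ls_def by blast
        then obtain x1 l where x1: "x1 \<in> S" "l \<in> Lf x1 \<beta>" "c \<le> l" unfolding downset_def by blast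
        then have cx1: "c \<in> Lf x1 \<beta>" using down_closed_L by blast
        obtain x2 where x2: "x2 \<in> S" "x \<le> x2" "x1 \<le> x2" using directed_ub2[OF dir cx(3) x1(1)] by blast
        have "c \<in> Lf x2 \<beta>" using cx1 ord_L[OF x2(3)] by blast
        then obtain w where w: "c \<le> w" "w \<in> Lf x2 \<beta>" "w \<in> Uf x2 \<beta>" using L_mixed by blast
        have "w \<in> upset {c}" using w(1) unfolding upset_def by blast
        moreover have "w \<in> Ls \<beta>"
        proof -
          have "w \<in> (\<Union>x\<in>S. Lf x \<beta>)" using w(2) x2(1) by blast
          then show ?thesis unfolding Ls_def by (rule subsetD[OF sub_closure])
        qed
        moreover have "w \<in> Uf x \<beta>" using w(3) ord_U[OF x2(2)] by blast
        ultimately have "F \<noteq> {}" using cx(1) by blast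
        then show "closedin lawson F \<and> F \<noteq> {}" using cF by blast
      qed
      have Ffilt: "\<forall>F1\<in>\<F>. \<forall>F2\<in>\<F>. \<exists>F3\<in>\<F>. F3 \<subseteq> F1 \<inter> F2"
      proof (intro ballI)
        fix F1 F2 assume "F1 \<in> \<F>" "F2 \<in> \<F>"
        then obtain c1 x1 c2 x2 where a: "F1 = upset {c1} \<inter> Ls \<beta> \<inter> Uf x1 \<beta>" "c1 \<in> Kb z" "x1 \<in> S"
          "F2 = upset {c2} \<inter> Ls \<beta> \<inter> Uf x2 \<beta>" "c2 \<in> Kb z" "x2 \<in> S"
          unfolding \<F>_def by blast
        obtain c3 where c3: "c3 \<in> Kb z" "c1 \<le> c3" "c2 \<le> c3" using directed_ub2[OF alg(1) a(2) a(5)] by blast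
        obtain x3 where x3: "x3 \<in> S" "x1 \<le> x3" "x2 \<le> x3" using directed_ub2[OF dir a(3) a(6)] by blast
        have m3: "upset {c3} \<inter> Ls \<beta> \<inter> Uf x3 \<beta> \<in> \<F>" unfolding \<F>_def using c3(1) x3(1) by blast
        have u1: "upset {c3} \<subseteq> upset {c1}" "upset {c3} \<subseteq> upset {c2}"
          unfolding upset_def using c3 order_trans by blast+
        have u2: "Uf x3 \<beta> \<subseteq> Uf x1 \<beta>" "Uf x3 \<beta> \<subseteq> Uf x2 \<beta>" using ord_U x3 by blast+
        have "upset {c3} \<inter> Ls \<beta> \<inter> Uf x3 \<beta> \<subseteq> F1 \<inter> F2" unfolding a(1) a(4) using u1 u2 by blast
        then show "\<exists>F3\<in>\<F>. F3 \<subseteq> F1 \<inter> F2" using m3 by blast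
      qed
      obtain w where w: "w \<in> \<Inter>\<F>" using lawson_fip[OF Fne Fcl Ffilt] by blast
      have "c \<le> w" if "c \<in> KD" "c \<le> z" for c
      proof -
        obtain x where "x \<in> S" using Sne by blast
        then have "upset {c} \<inter> Ls \<beta> \<inter> Uf x \<beta> \<in> \<F>" unfolding \<F>_def using that by blast
        then show ?thesis using w unfolding upset_def by blast
      qed
      then have zw: "z \<le> w" by (rule le_by_Kb)
      obtain c0 where c0: "c0 \<in> Kb z" using Kb_ne by blast
      have "w \<in> Ls \<beta>"
      proof -
        obtain x where "x \<in> S" using Sne by blast
        then have "upset {c0} \<inter> Ls \<beta> \<inter> Uf x \<beta> \<in> \<F>" unfolding \<F>_def using c0 by blast
        then show ?thesis using w by blast
      qed
      moreover have "w \<in> Us \<beta>"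
      proof -
        have "w \<in> Uf x \<beta>" if "x \<in> S" for x
        proof -
          have "upset {c0} \<inter> Ls \<beta> \<inter> Uf x \<beta> \<in> \<F>" unfolding \<F>_def using c0 that by blast
          then show ?thesis using w by blast
        qed
        then show ?thesis unfolding Us_def by blast
      qed
      ultimately show "z \<in> downset (Ls \<beta> \<inter> Us \<beta>)" using zw unfolding downset_def by blast
    qed
    have c5: "downset (Ls \<beta> \<inter> Us \<beta>) \<subseteq> Ls \<beta>"
      unfolding downset_def Ls_def using closure_down by blast
    have "Ls \<beta> = downset (Ls \<beta> \<inter> Us \<beta>)" using c4 c5 by (rule subset_antisym)
    then show ?thesis unfolding mixed_pd_def using c1 c2 c3 by blast
  qed
  define t where "t = inv isom (\<lambda>\<beta>. (Ls \<beta>, Us \<beta>))"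
  have it: "isom t = (\<lambda>\<beta>. (Ls \<beta>, Us \<beta>))" unfolding t_def by (rule isom_inv) (rule mem)
  have "x \<le> t" if "x \<in> S" for x
  proof -
    have "Lf x \<beta> \<subseteq> Ls \<beta>" for \<beta>
    proof -
      have "Lf x \<beta> \<subseteq> (\<Union>x\<in>S. Lf x \<beta>)" using that by blast
      then show ?thesis unfolding Ls_def using sub_closure by (rule subset_trans)
    qed
    moreover have "Us \<beta> \<subseteq> Uf x \<beta>" for \<beta> unfolding Us_def using that by blast
    ultimately show ?thesis unfolding ord_iff it by simp
  qed
  then have "s \<le> t" using s unfolding is_lub_def is_ub_def by blast
  then have "Lf s \<alpha> \<subseteq> Ls \<alpha> \<and> Us \<alpha> \<subseteq> Uf s \<alpha>" unfolding ord_iff it by simp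
  then show ?thesis unfolding Ls_def Us_def .
qed

lemma closed_compl_open: "openin lawson (X::'d set) \<Longrightarrow> closedin lawson (- X)"
  using closedin_lawson by simp

lemma dl_compact: "dl n d \<in> KD"
proof (induction n arbitrary: d)
  case 0
  show ?case unfolding KD_def compact_el_def
  proof (intro CollectI allI impI)
    fix S s assume "directed S \<and> is_lub S s \<and> dl 0 d \<le> s"
    then obtain x where "x \<in> S" using directed_ne by blast
    then show "\<exists>x\<in>S. dl 0 d \<le> x" using dl0_le by blast
  qed
next
  case (Suc n)
  let ?e = "dl (Suc n) d"
  define A where "A \<beta> = dl n ` Lf d \<beta>" for \<beta>
  define B where "B \<beta> = dl n ` Uf d \<beta>" for \<beta>
  have ie: "Lf ?e \<beta> = downset (A \<beta>)" "Uf ?e \<beta> = upset (B \<beta>)" for \<beta>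
    unfolding A_def B_def using isom_dlS[of n d \<beta>] by simp_all
  have AK: "A \<beta> \<subseteq> KD" "B \<beta> \<subseteq> KD" for \<beta> unfolding A_def B_def using Suc.IH by blast+
  have Bfin: "finite (B \<beta>)" for \<beta>
    unfolding B_def using dl_fin[of n] by (meson finite_subset image_mono subset_UNIV)
  have "compact_el ?e" unfolding compact_el_def
  proof (intro allI impI)
    fix S s assume h: "directed S \<and> is_lub S s \<and> ?e \<le> s"
    then have dir: "directed S" and s: "is_lub S s" and es: "?e \<le> s" by blast+
    have wa: "\<exists>x\<in>S. a \<in> Lf x \<beta>" if a: "a \<in> A \<beta>" for a \<beta>
    proof -
      have "a \<in> Lf ?e \<beta>" unfolding ie downset_def using a by blast
      then have "a \<in> Lf s \<beta>" using ord_L[OF es] by blast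
      then have "a \<in> scott_closure (\<Union>x\<in>S. Lf x \<beta>)" using lub_upper[OF dir s] by blast
      then have "a \<in> downset (\<Union>x\<in>S. Lf x \<beta>)" using compact_in_closure AK(1) a by blast
      then obtain x l where "x \<in> S" "l \<in> Lf x \<beta>" "a \<le> l" unfolding downset_def by blast
      then show ?thesis using down_closed_L by blast
    qed
    have wb: "\<exists>x\<in>S. Uf x \<beta> \<subseteq> upset (B \<beta>)" for \<beta>
    proof (rule ccontr)
      assume na: "\<not> (\<exists>x\<in>S. Uf x \<beta> \<subseteq> upset (B \<beta>))"
      define \<F> where "\<F> = {Uf x \<beta> \<inter> - upset (B \<beta>) | x. x \<in> S}"
      have Fne: "\<F> \<noteq> {}" unfolding \<F>_def using directed_ne[OF dir] by blast
      have cB: "closedin lawson (- upset (B \<beta>))" by (rule closed_compl_open) (rule open_upset_KD[OF AK(2)])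
      have Fcl: "\<forall>F\<in>\<F>. closedin lawson F \<and> F \<noteq> {}"
      proof
        fix F assume "F \<in> \<F>"
        then obtain x where x: "F = Uf x \<beta> \<inter> - upset (B \<beta>)" "x \<in> S" unfolding \<F>_def by blast
        have "closedin lawson F" unfolding x(1) by (intro closedin_Int U_closed cB)
        moreover have "F \<noteq> {}" using na x by blast
        ultimately show "closedin lawson F \<and> F \<noteq> {}" by blast
      qed
      have Ffilt: "\<forall>F1\<in>\<F>. \<forall>F2\<in>\<F>. \<exists>F3\<in>\<F>. F3 \<subseteq> F1 \<inter> F2"
      proof (intro ballI)
        fix F1 F2 assume "F1 \<in> \<F>" "F2 \<in> \<F>"
        then obtain x1 x2 where a: "F1 = Uf x1 \<beta> \<inter> - upset (B \<beta>)" "x1 \<in> S"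
          "F2 = Uf x2 \<beta> \<inter> - upset (B \<beta>)" "x2 \<in> S" unfolding \<F>_def by blast
        obtain x3 where x3: "x3 \<in> S" "x1 \<le> x3" "x2 \<le> x3" using directed_ub2[OF dir a(2) a(4)] by blast
        have m3: "Uf x3 \<beta> \<inter> - upset (B \<beta>) \<in> \<F>" unfolding \<F>_def using x3(1) by blast
        have u2: "Uf x3 \<beta> \<subseteq> Uf x1 \<beta>" "Uf x3 \<beta> \<subseteq> Uf x2 \<beta>" using ord_U x3 by blast+
        have "Uf x3 \<beta> \<inter> - upset (B \<beta>) \<subseteq> F1 \<inter> F2" unfolding a(1) a(3) using u2 by blast
        then show "\<exists>F3\<in>\<F>. F3 \<subseteq> F1 \<inter> F2" using m3 by blast
      qed
      obtain w where w: "w \<in> \<Inter>\<F>" using lawson_fip[OF Fne Fcl Ffilt] by blast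
      have "w \<in> (\<Inter>x\<in>S. Uf x \<beta>)" using w unfolding \<F>_def by blast
      then have "w \<in> Uf s \<beta>" using lub_upper[OF dir s] by blast
      then have "w \<in> Uf ?e \<beta>" using ord_U[OF es] by blast
      moreover obtain x0 where "x0 \<in> S" using directed_ne[OF dir] by blast
      then have "w \<notin> upset (B \<beta>)" using w unfolding \<F>_def by blast
      ultimately show False unfolding ie by blast
    qed
    define PA where "PA = {(\<beta>, a). a \<in> A \<beta>}"
    have PAfin: "finite PA"
    proof -
      have "PA \<subseteq> UNIV \<times> range (dl n)" unfolding PA_def A_def by blast
      moreover have "finite (UNIV \<times> range (dl n) :: ('act \<times> 'd) set)" using dl_fin by simp
      ultimately show ?thesis by (rule finite_subset)
    qed
    have "\<forall>p\<in>PA. \<exists>x. x \<in> S \<and> snd p \<in> Lf x (fst p)" unfolding PA_def using wa by fastforce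
    then have "\<exists>xa. \<forall>p\<in>PA. xa p \<in> S \<and> snd p \<in> Lf (xa p) (fst p)" by (rule bchoice)
    then obtain xa where xa: "\<forall>p\<in>PA. xa p \<in> S \<and> snd p \<in> Lf (xa p) (fst p)" by blast
    have "\<forall>\<beta>. \<exists>x. x \<in> S \<and> Uf x \<beta> \<subseteq> upset (B \<beta>)" using wb by blast
    then have "\<exists>xb. \<forall>\<beta>. xb \<beta> \<in> S \<and> Uf (xb \<beta>) \<beta> \<subseteq> upset (B \<beta>)" by (rule choice)
    then obtain xb where xb: "\<forall>\<beta>. xb \<beta> \<in> S \<and> Uf (xb \<beta>) \<beta> \<subseteq> upset (B \<beta>)" by blast
    have "finite (xa ` PA \<union> range xb)" using PAfin by simp
    moreover have "xa ` PA \<union> range xb \<subseteq> S" using xa xb by blast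
    ultimately obtain z where z: "z \<in> S" "\<forall>x\<in>xa ` PA \<union> range xb. x \<le> z"
      using directed_finite_ub[OF dir] by blast
    have "?e \<le> z" unfolding ord_iff
    proof
      fix \<beta>
      have "Lf ?e \<beta> \<subseteq> Lf z \<beta>"
      proof
        fix y assume "y \<in> Lf ?e \<beta>"
        then obtain a where a: "a \<in> A \<beta>" "y \<le> a" unfolding ie downset_def by blast
        then have p: "(\<beta>, a) \<in> PA" unfolding PA_def by blast
        then have "a \<in> Lf (xa (\<beta>, a)) \<beta>" using xa by fastforce
        moreover have "xa (\<beta>, a) \<le> z" using z(2) p by blast
        ultimately have "a \<in> Lf z \<beta>" using ord_L by blast
        then show "y \<in> Lf z \<beta>" using a(2) down_closed_L by blast
      qed
      moreover have "Uf z \<beta> \<subseteq> Uf ?e \<beta>"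
      proof -
        have "xb \<beta> \<le> z" using z(2) by blast
        then have "Uf z \<beta> \<subseteq> Uf (xb \<beta>) \<beta>" by (rule ord_U)
        then show ?thesis unfolding ie using xb by blast
      qed
      ultimately show "Lf ?e \<beta> \<subseteq> Lf z \<beta> \<and> Uf z \<beta> \<subseteq> Uf ?e \<beta>" by blast
    qed
    then show "\<exists>x\<in>S. ?e \<le> x" using z(1) by blast
  qed
  then show ?case unfolding KD_def by blast
qed

section \<open>Semantics\<close>

lemma sat_mono:
  "x \<le> y \<Longrightarrow> (sat isom ModeA x \<phi> \<longrightarrow> sat isom ModeA y \<phi>) \<and> (sat isom ModeC y \<phi> \<longrightarrow> sat isom ModeC x \<phi>)"
proof (induction \<phi> arbitrary: x y)
  case TT then show ?case by simp
next
  case (Neg \<phi>) then show ?case by (simp; blast)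
next
  case (Conj \<phi> \<psi>) then show ?case by simp
next
  case (Dia \<alpha> \<phi>)
  have "Lf x \<alpha> \<subseteq> Lf y \<alpha>" "Uf y \<alpha> \<subseteq> Uf x \<alpha>" using ord_L[OF Dia.prems] ord_U[OF Dia.prems] by auto
  then show ?case by auto
qed

fun hdep :: "'act hml \<Rightarrow> nat" where
  "hdep TT = 0"
| "hdep (Neg \<phi>) = hdep \<phi>"
| "hdep (Dia \<alpha> \<phi>) = Suc (hdep \<phi>)"
| "hdep (Conj \<phi> \<psi>) = max (hdep \<phi>) (hdep \<psi>)"

lemma sat_transfer: "hdep \<phi> \<le> n \<Longrightarrow> sat isom m (dl n d) \<phi> = sat isom m d \<phi>"
proof (induction \<phi> arbitrary: n m d)
  case TT then show ?case by simp
next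
  case (Neg \<phi>) then show ?case by simp
next
  case (Conj \<phi> \<psi>) then show ?case by simp
next
  case (Dia \<alpha> \<phi>)
  then obtain k where n: "n = Suc k" and hk: "hdep \<phi> \<le> k" by (cases n) auto
  note IH = Dia.IH[OF hk]
  show ?case
  proof (cases m)
    case ModeA
    have "sat isom ModeA (dl n d) (Dia \<alpha> \<phi>) \<longleftrightarrow> (\<exists>y\<in>downset (dl k ` Lf d \<alpha>). sat isom ModeA y \<phi>)"
      unfolding n using isom_dlS[of k d \<alpha>] by auto
    also have "\<dots> \<longleftrightarrow> (\<exists>l\<in>Lf d \<alpha>. sat isom ModeA l \<phi>)"
    proof
      assume "\<exists>y\<in>downset (dl k ` Lf d \<alpha>). sat isom ModeA y \<phi>"
      then obtain y l where "l \<in> Lf d \<alpha>" "y \<le> dl k l" "sat isom ModeA y \<phi>" unfolding downset_def by blast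
      then have "sat isom ModeA (dl k l) \<phi>" using sat_mono by blast
      then show "\<exists>l\<in>Lf d \<alpha>. sat isom ModeA l \<phi>" using IH \<open>l \<in> Lf d \<alpha>\<close> by blast
    next
      assume "\<exists>l\<in>Lf d \<alpha>. sat isom ModeA l \<phi>"
      then obtain l where "l \<in> Lf d \<alpha>" "sat isom ModeA l \<phi>" by blast
      then have "sat isom ModeA (dl k l) \<phi>" "dl k l \<in> downset (dl k ` Lf d \<alpha>)"
        using IH unfolding downset_def by blast+
      then show "\<exists>y\<in>downset (dl k ` Lf d \<alpha>). sat isom ModeA y \<phi>" by blast
    qed
    also have "\<dots> \<longleftrightarrow> sat isom ModeA d (Dia \<alpha> \<phi>)" by auto
    finally show ?thesis using ModeA by simp
  next
    case ModeC
    have "sat isom ModeC (dl n d) (Dia \<alpha> \<phi>) \<longleftrightarrow> (\<exists>y\<in>upset (dl k ` Uf d \<alpha>). sat isom ModeC y \<phi>)"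
      unfolding n using isom_dlS[of k d \<alpha>] by auto
    also have "\<dots> \<longleftrightarrow> (\<exists>u\<in>Uf d \<alpha>. sat isom ModeC u \<phi>)"
    proof
      assume "\<exists>y\<in>upset (dl k ` Uf d \<alpha>). sat isom ModeC y \<phi>"
      then obtain y u where "u \<in> Uf d \<alpha>" "dl k u \<le> y" "sat isom ModeC y \<phi>" unfolding upset_def by blast
      then have "sat isom ModeC (dl k u) \<phi>" using sat_mono by blast
      then show "\<exists>u\<in>Uf d \<alpha>. sat isom ModeC u \<phi>" using IH \<open>u \<in> Uf d \<alpha>\<close> by blast
    next
      assume "\<exists>u\<in>Uf d \<alpha>. sat isom ModeC u \<phi>"
      then obtain u where "u \<in> Uf d \<alpha>" "sat isom ModeC u \<phi>" by blast
      then have "sat isom ModeC (dl k u) \<phi>" "dl k u \<in> upset (dl k ` Uf d \<alpha>)"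
        using IH unfolding upset_def by blast+
      then show "\<exists>y\<in>upset (dl k ` Uf d \<alpha>). sat isom ModeC y \<phi>" by blast
    qed
    also have "\<dots> \<longleftrightarrow> sat isom ModeC d (Dia \<alpha> \<phi>)" by auto
    finally show ?thesis using ModeC by simp
  qed
qed

lemma clopen_upset: "finite X \<Longrightarrow> X \<subseteq> KD \<Longrightarrow> lawson_clopen (upset (X::'d set))"
  unfolding lawson_clopen_def using open_upset_KD closed_upset_finite by blast

lemma clopen_compl: "lawson_clopen (X::'d set) \<Longrightarrow> lawson_clopen (- X)"
  unfolding lawson_clopen_def using closedin_lawson by simp

lemma semA_clopen: "lawson_clopen (sem isom ModeA \<phi>)"
proof -
  let ?N = "hdep \<phi>" let ?S = "sem isom ModeA \<phi>"
  have "?S = upset (?S \<inter> range (dl ?N))"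
  proof
    show "?S \<subseteq> upset (?S \<inter> range (dl ?N))"
    proof
      fix d assume "d \<in> ?S"
      then have "dl ?N d \<in> ?S" unfolding sem_def using sat_transfer[of \<phi> ?N] by simp
      then show "d \<in> upset (?S \<inter> range (dl ?N))" unfolding upset_def using dl_defl by blast
    qed
    show "upset (?S \<inter> range (dl ?N)) \<subseteq> ?S"
      unfolding upset_def sem_def using sat_mono by blast
  qed
  moreover have "finite (?S \<inter> range (dl ?N))" using dl_fin by simp
  moreover have "?S \<inter> range (dl ?N) \<subseteq> KD" using dl_compact by blast
  ultimately show ?thesis using clopen_upset by metis
qed

lemma semC_clopen: "lawson_clopen (sem isom ModeC \<phi>)"
proof -
  let ?N = "hdep \<phi>" let ?S = "- sem isom ModeC \<phi>"
  have "?S = upset (?S \<inter> range (dl ?N))"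
  proof
    show "?S \<subseteq> upset (?S \<inter> range (dl ?N))"
    proof
      fix d assume "d \<in> ?S"
      then have "dl ?N d \<in> ?S" unfolding sem_def using sat_transfer[of \<phi> ?N] by simp
      then show "d \<in> upset (?S \<inter> range (dl ?N))" unfolding upset_def using dl_defl by blast
    qed
    show "upset (?S \<inter> range (dl ?N)) \<subseteq> ?S"
      unfolding upset_def sem_def using sat_mono by blast
  qed
  moreover have "finite (?S \<inter> range (dl ?N))" using dl_fin by simp
  moreover have "?S \<inter> range (dl ?N) \<subseteq> KD" using dl_compact by blast
  ultimately have "lawson_clopen ?S" using clopen_upset by metis
  then show ?thesis using clopen_compl by fastforce
qed

lemma CPhi_closed: "closedin lawson (C_Phi isom)"
proof (cases "PhiSet = ({} :: 'act hml set)")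
  case True
  then show ?thesis unfolding C_Phi_def using closedin_topspace[of "lawson::'d topology"] topspace_lawson by simp
next
  case False
  show ?thesis unfolding C_Phi_def
    by (rule closedin_INT) (use False semA_clopen lawson_clopen_def in blast)+
qed

end

theorem lemma3p17:
  fixes isom :: "'d::order \<Rightarrow> ('act::finite \<Rightarrow> 'd set \<times> 'd set)"
  assumes "initial_solution isom"
  shows "(\<forall>\<phi>. lawson_clopen (sem isom ModeA \<phi>) \<and> lawson_clopen (sem isom ModeC \<phi>))
         \<and> closedin lawson (C_Phi isom)"
proof -
  interpret dom isom by (rule dom.intro) (rule assms)
  show ?thesis using semA_clopen semC_clopen CPhi_closed by blast
qed

end
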